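(* Let $d\geq 1$ be an integer and let $G$ be a connected bipartite graph with $|V(G)|\geq 2d+2$ and $\alpha(G)\geq d+1$. Then there exists a set $S\subseteq E(G)$ with $|S|\leq 2d+1$ such that $\alpha(G/S)\leq \alpha(G)-d$. In other words, $(G,2d+1)$ is a yes-instance of $d$-Contraction Blocker$(\alpha)$.
   Context: $\alpha(G)$ denotes the independence number of $G$, i.e. the maximum size of a set of pairwise non-adjacent vertices. For $S\subseteq E(G)$, $G/S$ is the graph obtained from $G$ by contracting every edge of $S$. Equivalently, the vertices of $G/S$ correspond to the connected components of the spanning subgraph $(V(G),S)$, and two such vertices are adjacent iff some vertex of the one component is adjacent in $G$ to some vertex of the other. $d$-Contraction Blocker$(\pi)$ (for fixed $d\ge 1$) takes a graph $G$ and an integer $k$ and asks whether there is $S\subseteq E(G)$ with $|S|\le k$ and $\pi(G/S)\le \pi(G)-d$. *)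

theory Defs
  imports Main
begin

definition graph :: "'a set \<Rightarrow> 'a set set \<Rightarrow> bool" where
  "graph V E \<longleftrightarrow> finite V \<and> (\<forall>e\<in>E. e \<subseteq> V \<and> card e = 2)"

definition adj_rel :: "'a set set \<Rightarrow> ('a \<times> 'a) set" where
  "adj_rel E = {(u, v). {u, v} \<in> E}"

definition connected_graph :: "'a set \<Rightarrow> 'a set set \<Rightarrow> bool" where
  "connected_graph V E \<longleftrightarrow> (\<forall>u\<in>V. \<forall>v\<in>V. (u, v) \<in> (adj_rel E)\<^sup>*)"

definition bipartite :: "'a set \<Rightarrow> 'a set set \<Rightarrow> bool" where
  "bipartite V E \<longleftrightarrow> (\<exists>A B. A \<union> B = V \<and> A \<inter> B = {} \<and>
      (\<forall>u v. {u, v} \<in> E \<longrightarrow> (u \<in> A \<and> v \<in> B) \<or> (u \<in> B \<and> v \<in> A)))"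

definition independent_set :: "'a set \<Rightarrow> 'a set set \<Rightarrow> 'a set \<Rightarrow> bool" where
  "independent_set V E I \<longleftrightarrow> I \<subseteq> V \<and> (\<forall>u\<in>I. \<forall>v\<in>I. {u, v} \<notin> E)"

definition alpha :: "'a set \<Rightarrow> 'a set set \<Rightarrow> nat" where
  "alpha V E = Max {card I | I. independent_set V E I}"

definition comp_rel :: "'a set \<Rightarrow> 'a set set \<Rightarrow> ('a \<times> 'a) set" where
  "comp_rel V S = Restr ((adj_rel S)\<^sup>*) V"

(* G/S: vertices are the components of (V,S) *)
definition contr_V :: "'a set \<Rightarrow> 'a set set \<Rightarrow> 'a set set" where
  "contr_V V S = V // comp_rel V S"

definition contr_E :: "'a set \<Rightarrow> 'a set set \<Rightarrow> 'a set set \<Rightarrow> 'a set set set" where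
  "contr_E V E S = {{X, Y} | X Y. X \<in> contr_V V S \<and> Y \<in> contr_V V S \<and> X \<noteq> Y \<and>
      (\<exists>x\<in>X. \<exists>y\<in>Y. {x, y} \<in> E)}"

end

theory Submission
  imports Defs
begin

lemma alpha_fin: "finite W \<Longrightarrow> finite {card I | I. independent_set W E I}"
proof -
  assume "finite W"
  have "{card I | I. independent_set W E I} \<subseteq> card ` Pow W"
    by (auto simp: independent_set_def)
  thus ?thesis using \<open>finite W\<close> finite_subset by blast
qed

lemma alpha_ge: "finite W \<Longrightarrow> independent_set W E I \<Longrightarrow> card I \<le> alpha W E"
  unfolding alpha_def using alpha_fin by (intro Max_ge) auto

lemma alpha_ex: "finite W \<Longrightarrow> \<exists>I. independent_set W E I \<and> card I = alpha W E"
proof -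
  assume f: "finite W"
  have "independent_set W E {}" by (simp add: independent_set_def)
  hence "{card I | I. independent_set W E I} \<noteq> {}" by blast
  from Max_in[OF alpha_fin[OF f] this] show ?thesis unfolding alpha_def by auto
qed

lemma alpha_le: "finite W \<Longrightarrow> (\<And>I. independent_set W E I \<Longrightarrow> card I \<le> k) \<Longrightarrow> alpha W E \<le> k"
  using alpha_ex by metis

lemma indep_mono: "independent_set W E I \<Longrightarrow> W \<subseteq> W' \<Longrightarrow> independent_set W' E I"
  by (auto simp: independent_set_def)

lemma alpha_mono: "finite W' \<Longrightarrow> W \<subseteq> W' \<Longrightarrow> alpha W E \<le> alpha W' E"
proof -
  assume a: "finite W'" "W \<subseteq> W'"
  hence "finite W" by (rule finite_subset[rotated])
  then obtain I where "independent_set W E I" "card I = alpha W E" using alpha_ex by blast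
  thus ?thesis using alpha_ge[OF a(1)] indep_mono[OF _ a(2)] by metis
qed

definition cross :: "'a set set \<Rightarrow> 'a set \<Rightarrow> bool" where
  "cross E C \<longleftrightarrow> (\<forall>x y. {x,y} \<in> E \<longrightarrow> (x \<in> C \<longleftrightarrow> y \<notin> C))"

lemma cross_neg: "cross E C \<Longrightarrow> cross E (- C)"
  by (auto simp: cross_def)

lemma comb_indep:
  assumes "cross E C" "independent_set W E I" "independent_set W E J"
  shows "independent_set W E ((C \<inter> (I \<union> J)) \<union> ((I \<inter> J) - C))"
  using assms unfolding cross_def independent_set_def by blast

lemma comb_card:
  assumes "finite I" "finite J"
  shows "card ((C \<inter> (I \<union> J)) \<union> ((I \<inter> J) - C)) + card (((I \<union> J) - C) \<union> (C \<inter> I \<inter> J))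
         = card I + card J"
proof -
  have f: "finite (I \<union> J)" using assms by auto
  have 1: "card ((C \<inter> (I \<union> J)) \<union> ((I \<inter> J) - C)) = card (C \<inter> (I \<union> J)) + card ((I \<inter> J) - C)"
    by (rule card_Un_disjoint) (use f in auto)
  have 2: "card (((I \<union> J) - C) \<union> (C \<inter> I \<inter> J)) = card ((I \<union> J) - C) + card (C \<inter> I \<inter> J)"
    by (rule card_Un_disjoint) (use f in auto)
  have 3: "card (C \<inter> (I \<union> J)) + card (C \<inter> I \<inter> J) = card (C \<inter> I) + card (C \<inter> J)"
  proof -
    have "card ((C \<inter> I) \<union> (C \<inter> J)) + card ((C \<inter> I) \<inter> (C \<inter> J)) = card (C \<inter> I) + card (C \<inter> J)"
      using card_Un_Int[of "C \<inter> I" "C \<inter> J"] assms by simp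
    moreover have "(C \<inter> I) \<union> (C \<inter> J) = C \<inter> (I \<union> J)" "(C \<inter> I) \<inter> (C \<inter> J) = C \<inter> I \<inter> J" by auto
    ultimately show ?thesis by simp
  qed
  have 4: "card ((I \<union> J) - C) + card ((I \<inter> J) - C) = card (I - C) + card (J - C)"
  proof -
    have "card ((I - C) \<union> (J - C)) + card ((I - C) \<inter> (J - C)) = card (I - C) + card (J - C)"
      using card_Un_Int[of "I - C" "J - C"] assms by simp
    moreover have "(I - C) \<union> (J - C) = (I \<union> J) - C" "(I - C) \<inter> (J - C) = (I \<inter> J) - C" by auto
    ultimately show ?thesis by simp
  qed
  have 5: "card (C \<inter> I) + card (I - C) = card I"
  proof -
    have "card ((C \<inter> I) \<union> (I - C)) = card (C \<inter> I) + card (I - C)"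
      by (rule card_Un_disjoint) (use assms in auto)
    moreover have "(C \<inter> I) \<union> (I - C) = I" by auto
    ultimately show ?thesis by simp
  qed
  have 6: "card (C \<inter> J) + card (J - C) = card J"
  proof -
    have "card ((C \<inter> J) \<union> (J - C)) = card (C \<inter> J) + card (J - C)"
      by (rule card_Un_disjoint) (use assms in auto)
    moreover have "(C \<inter> J) \<union> (J - C) = J" by auto
    ultimately show ?thesis by simp
  qed
  show ?thesis using 1 2 3 4 5 6 by linarith
qed

lemma key:
  assumes fW: "finite W" and cr: "cross E C" and vC: "v \<in> C" and vW: "v \<in> W"
  shows "alpha (W - {v}) E < alpha W E \<or> (\<exists>u\<in>W. {v,u} \<in> E \<and> alpha (W - {v,u}) E < alpha W E)"
proof (rule ccontr)
  assume "\<not> ?thesis"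
  hence h1: "alpha W E \<le> alpha (W - {v}) E"
    and h2: "\<And>u. u \<in> W \<Longrightarrow> {v,u} \<in> E \<Longrightarrow> alpha W E \<le> alpha (W - {v,u}) E" by auto
  define N where "N = {u\<in>W. {v,u} \<in> E}"
  have fN: "finite N" using fW N_def by auto
  have claim: "finite U \<Longrightarrow> U \<subseteq> N \<Longrightarrow> \<exists>I. independent_set W E I \<and> card I = alpha W E \<and> v \<notin> I \<and> I \<inter> U = {}" for U
  proof (induction U rule: finite_induct)
    case empty
    obtain I where I: "independent_set (W - {v}) E I" "card I = alpha (W - {v}) E"
      using alpha_ex[of "W - {v}" E] fW by auto
    have Iw: "independent_set W E I" using I indep_mono by blast
    have "card I \<le> alpha W E" using alpha_ge[OF fW Iw] .
    moreover have "v \<notin> I" using I(1) by (auto simp: independent_set_def)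
    ultimately show ?case using Iw I h1 by auto
  next
    case (insert u U)
    then obtain I where I: "independent_set W E I" "card I = alpha W E" "v \<notin> I" "I \<inter> U = {}" by auto
    have uN: "u \<in> N" using insert by auto
    hence uW: "u \<in> W" and vu: "{v,u} \<in> E" by (auto simp: N_def)
    obtain J where J: "independent_set (W - {v,u}) E J" "card J = alpha (W - {v,u}) E"
      using alpha_ex[of "W - {v,u}" E] fW by auto
    have Jw: "independent_set W E J" using J indep_mono by blast
    have "card J = alpha W E" using alpha_ge[OF fW Jw] J h2[OF uW vu] by auto
    have Jvu: "v \<notin> J" "u \<notin> J" using J(1) by (auto simp: independent_set_def)
    define P where "P = (C \<inter> (I \<union> J)) \<union> ((I \<inter> J) - C)"
    define Q where "Q = ((I \<union> J) - C) \<union> (C \<inter> I \<inter> J)"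
    have Pi: "independent_set W E P" unfolding P_def by (rule comb_indep[OF cr I(1) Jw])
    have Qi0: "independent_set W E ((- C \<inter> (I \<union> J)) \<union> ((I \<inter> J) - - C))"
      by (rule comb_indep[OF cross_neg[OF cr] I(1) Jw])
    have "(- C \<inter> (I \<union> J)) \<union> ((I \<inter> J) - - C) = Q" unfolding Q_def by auto
    with Qi0 have Qi: "independent_set W E Q" by simp
    have fin: "finite I" "finite J" using I(1) Jw fW by (auto simp: independent_set_def intro: finite_subset)
    have "card P + card Q = card I + card J" unfolding P_def Q_def by (rule comb_card[OF fin])
    moreover have "card Q \<le> alpha W E" using alpha_ge[OF fW Qi] .
    moreover have "card P \<le> alpha W E" using alpha_ge[OF fW Pi] .
    ultimately have cP: "card P = alpha W E" using I(2) \<open>card J = alpha W E\<close> by linarith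
    have uC: "u \<notin> C" using cr vu vC unfolding cross_def by blast
    have "\<forall>x\<in>U. x \<notin> C" using insert(4) cr vC unfolding cross_def N_def by blast
    hence "P \<inter> insert u U = {}" using I(4) Jvu uC unfolding P_def by blast
    moreover have "v \<notin> P" using I(3) Jvu unfolding P_def by blast
    ultimately show ?case using Pi cP by blast
  qed
  obtain I where I: "independent_set W E I" "card I = alpha W E" "v \<notin> I" "I \<inter> N = {}"
    using claim[OF fN order_refl] by blast
  have noloop: "{v,v} \<notin> E" using cr unfolding cross_def by blast
  have "independent_set W E (insert v I)"
    using I(1,4) vW noloop unfolding independent_set_def N_def by (auto simp: insert_commute)
  moreover have "finite I" using I(1) fW by (auto simp: independent_set_def intro: finite_subset)
  ultimately have "card I + 1 \<le> alpha W E" using alpha_ge[OF fW] I(3) by fastforce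
  thus False using I(2) by simp
qed

lemma cross_path: "(a,b) \<in> R\<^sup>* \<Longrightarrow> a \<in> X \<Longrightarrow> b \<notin> X \<Longrightarrow> \<exists>x y. (x,y) \<in> R \<and> x \<in> X \<and> y \<notin> X"
  by (induction rule: rtrancl_induct) auto

lemma conn_insert:
  assumes "\<forall>x\<in>Y. \<forall>y\<in>Y. (x,y) \<in> R\<^sup>*" "a \<in> Y" "(a,b) \<in> R" "(b,a) \<in> R"
  shows "\<forall>x\<in>insert b Y. \<forall>y\<in>insert b Y. (x,y) \<in> R\<^sup>*"
proof (intro ballI)
  fix x y assume x: "x \<in> insert b Y" and y: "y \<in> insert b Y"
  have ba: "(b,a) \<in> R\<^sup>*" "(a,b) \<in> R\<^sup>*" using assms by auto
  have xa: "(x,a) \<in> R\<^sup>*" using x assms(1,2) ba by auto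
  have ay: "(a,y) \<in> R\<^sup>*" using y assms(1,2) ba by auto
  show "(x,y) \<in> R\<^sup>*" using xa ay by (rule rtrancl_trans)
qed

lemma adj_rel_iff: "(a,b) \<in> adj_rel S \<longleftrightarrow> {a,b} \<in> S"
  by (simp add: adj_rel_def)

lemma adj_rel_mono: "S \<subseteq> S' \<Longrightarrow> adj_rel S \<subseteq> adj_rel S'"
  by (auto simp: adj_rel_def)

lemma grow:
  assumes g: "graph V E" and conn: "connected_graph V E" and crA: "cross E A"
  shows "m \<le> card V \<Longrightarrow> \<exists>X S. X \<subseteq> V \<and> S \<subseteq> E \<and> finite S \<and> card S \<le> card X - 1 \<and> m \<le> card X \<and>
      card X \<le> m + 1 \<and> (\<forall>e\<in>S. e \<subseteq> X) \<and> (\<forall>x\<in>X. \<forall>y\<in>X. (x,y) \<in> (adj_rel S)\<^sup>*) \<and>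
      card X \<le> 2 * (alpha V E - alpha (V - X) E)"
proof (induction m)
  case 0
  show ?case by (rule exI[of _ "{}"], rule exI[of _ "{}"]) simp
next
  case (Suc m)
  have fV: "finite V" using g by (simp add: graph_def)
  from Suc obtain X S where X: "X \<subseteq> V" "S \<subseteq> E" "finite S" "card S \<le> card X - 1" "m \<le> card X"
      "card X \<le> m + 1" "\<forall>e\<in>S. e \<subseteq> X" "\<forall>x\<in>X. \<forall>y\<in>X. (x,y) \<in> (adj_rel S)\<^sup>*"
      "card X \<le> 2 * (alpha V E - alpha (V - X) E)" by auto
  have fX: "finite X" using X(1) fV finite_subset by blast
  show ?case
  proof (cases "Suc m \<le> card X")
    case True thus ?thesis using X by (intro exI[of _ X] exI[of _ S]) auto
  next
    case False
    hence cX: "card X = m" using X(5) by simp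
    have ne: "V - X \<noteq> {}" using Suc(2) cX X(1) fV
      by (metis Diff_eq_empty_iff Suc_n_not_le_n subset_antisym)
    have "\<exists>v S1. v \<in> V - X \<and> S1 \<subseteq> E \<and> finite S1 \<and> card S1 \<le> card X \<and> (\<forall>e\<in>S1. e \<subseteq> insert v X)
          \<and> (\<forall>x\<in>insert v X. \<forall>y\<in>insert v X. (x,y) \<in> (adj_rel S1)\<^sup>*) \<and> S \<subseteq> S1"
    proof (cases "X = {}")
      case True
      then obtain v where "v \<in> V - X" using ne by blast
      moreover have "S = {}" using X(3,4) True by simp
      ultimately show ?thesis using True by (intro exI[of _ v] exI[of _ "{}"]) auto
    next
      case False
      then obtain x0 where x0: "x0 \<in> X" by blast
      obtain y0 where y0: "y0 \<in> V - X" using ne by blast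
      have "(x0, y0) \<in> (adj_rel E)\<^sup>*" using conn x0 y0 X(1) unfolding connected_graph_def by blast
      then obtain x v where xv: "(x,v) \<in> adj_rel E" "x \<in> X" "v \<notin> X"
        using cross_path[of x0 y0 _ X] x0 y0 by blast
      have xvE: "{x,v} \<in> E" using xv(1) by (simp add: adj_rel_iff)
      hence vV: "v \<in> V" using g unfolding graph_def by blast
      define S1 where "S1 = insert {x,v} S"
      have "card S1 \<le> card S + 1" unfolding S1_def using X(3) by (simp add: card_insert_if)
      moreover have "card X \<ge> 1" using False fX by (simp add: Suc_leI card_gt_0_iff)
      ultimately have cS1: "card S1 \<le> card X" using X(4) by linarith
      have cc1: "\<forall>x\<in>X. \<forall>y\<in>X. (x,y) \<in> (adj_rel S1)\<^sup>*"
        using X(8) rtrancl_mono[OF adj_rel_mono[of S S1]] unfolding S1_def by blast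
      have cc2: "(x,v) \<in> adj_rel S1" "(v,x) \<in> adj_rel S1"
        unfolding S1_def adj_rel_iff by (auto simp: insert_commute)
      have "\<forall>a\<in>insert v X. \<forall>b\<in>insert v X. (a,b) \<in> (adj_rel S1)\<^sup>*"
        by (rule conn_insert[OF cc1 xv(2) cc2])
      moreover have "\<forall>e\<in>S1. e \<subseteq> insert v X" using X(7) xv(2) unfolding S1_def by auto
      ultimately show ?thesis using xv vV xvE X(2,3) cS1
        by (intro exI[of _ v] exI[of _ S1]) (auto simp: S1_def)
    qed
    then obtain v S1 where v: "v \<in> V - X" "S1 \<subseteq> E" "finite S1" "card S1 \<le> card X"
      "\<forall>e\<in>S1. e \<subseteq> insert v X" "\<forall>x\<in>insert v X. \<forall>y\<in>insert v X. (x,y) \<in> (adj_rel S1)\<^sup>*" by blast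
    define W where "W = V - X"
    have fW: "finite W" using fV W_def by simp
    define C where "C = (if v \<in> A then A else - A)"
    have crC: "cross E C" using crA cross_neg unfolding C_def by auto
    have vC: "v \<in> C" unfolding C_def by auto
    have aW: "alpha W E \<le> alpha V E" using alpha_mono[OF fV] W_def by auto
    from key[OF fW crC vC] v(1) W_def
    consider "alpha (W - {v}) E < alpha W E" | u where "u \<in> W" "{v,u} \<in> E" "alpha (W - {v,u}) E < alpha W E"
      by auto
    thus ?thesis
    proof cases
      case 1
      have eq: "V - insert v X = W - {v}" unfolding W_def by auto
      have c: "card (insert v X) = Suc m" using cX v(1) fX by simp
      have b1: "alpha (V - insert v X) E + 1 \<le> alpha W E" using 1 eq by simp
      have b2: "card (insert v X) \<le> 2 * (alpha V E - alpha (V - insert v X) E)"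
        using b1 aW X(9) c cX unfolding W_def by linarith
      have s1: "insert v X \<subseteq> V" using v(1) X(1) by blast
      have s2: "card S1 \<le> card (insert v X) - 1" using v(4) c cX by simp
      show ?thesis
        apply (rule exI[of _ "insert v X"], rule exI[of _ S1])
        using s1 v(2,3) s2 c b2 v(5,6) by simp
    next
      case (2 u)
      have uv: "u \<noteq> v" using 2(2) crC unfolding cross_def by blast
      have eq: "V - insert u (insert v X) = W - {v,u}" unfolding W_def by auto
      have c: "card (insert u (insert v X)) = Suc (Suc m)" using cX v(1) fX 2(1) uv W_def by simp
      define S2 where "S2 = insert {v,u} S1"
      have cS2: "card S2 \<le> card S1 + 1" unfolding S2_def using v(3) by (simp add: card_insert_if)
      have "(v,u) \<in> adj_rel S2" "(u,v) \<in> adj_rel S2"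
        unfolding S2_def adj_rel_iff by (auto simp: insert_commute)
      moreover have "\<forall>x\<in>insert v X. \<forall>y\<in>insert v X. (x,y) \<in> (adj_rel S2)\<^sup>*"
        using v(6) rtrancl_mono[OF adj_rel_mono[of S1 S2]] unfolding S2_def by blast
      ultimately have cn: "\<forall>x\<in>insert u (insert v X). \<forall>y\<in>insert u (insert v X). (x,y) \<in> (adj_rel S2)\<^sup>*"
        using conn_insert[of "insert v X" _ v u] by blast
      have ed: "\<forall>e\<in>S2. e \<subseteq> insert u (insert v X)" using v(5) unfolding S2_def by auto
      have b1: "alpha (V - insert u (insert v X)) E + 1 \<le> alpha W E" using 2(3) eq by simp
      have b2: "card (insert u (insert v X)) \<le> 2 * (alpha V E - alpha (V - insert u (insert v X)) E)"
        using b1 aW X(9) c cX unfolding W_def by linarith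
      have s1: "insert u (insert v X) \<subseteq> V" using v(1) X(1) 2(1) W_def by blast
      have s2: "card S2 \<le> card (insert u (insert v X)) - 1" using v(4) c cX cS2 by simp
      have s3: "S2 \<subseteq> E" "finite S2" using v(2,3) 2(2) unfolding S2_def by auto
      show ?thesis
        apply (rule exI[of _ "insert u (insert v X)"], rule exI[of _ S2])
        using s1 s2 s3 c b2 ed cn by simp
    qed
  qed
qed

lemma path_in: "(a,b) \<in> (adj_rel S)\<^sup>* \<Longrightarrow> (\<forall>e\<in>S. e \<subseteq> X) \<Longrightarrow> a = b \<or> (a \<in> X \<and> b \<in> X)"
proof (induction rule: rtrancl_induct)
  case base thus ?case by simp
next
  case (step b c)
  hence "{b,c} \<in> S" by (simp add: adj_rel_iff)
  hence "b \<in> X" "c \<in> X" using step.prems by auto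
  thus ?case using step by auto
qed

lemma contr_V_eq:
  assumes XV: "X \<subseteq> V" and ne: "X \<noteq> {}" and ed: "\<forall>e\<in>S. e \<subseteq> X"
    and cn: "\<forall>x\<in>X. \<forall>y\<in>X. (x,y) \<in> (adj_rel S)\<^sup>*"
  shows "contr_V V S = insert X ((\<lambda>y. {y}) ` (V - X))"
proof -
  have c1: "comp_rel V S `` {x} = X" if "x \<in> X" for x
    using that XV cn path_in[OF _ ed, of x] unfolding comp_rel_def by auto
  have c2: "comp_rel V S `` {y} = {y}" if "y \<in> V - X" for y
    using that path_in[OF _ ed, of y] unfolding comp_rel_def by auto
  show ?thesis unfolding contr_V_def quotient_def
  proof (intro equalityI subsetI)
    fix Z assume "Z \<in> (\<Union>x\<in>V. {comp_rel V S `` {x}})"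
    then obtain x where "x \<in> V" "Z = comp_rel V S `` {x}" by blast
    thus "Z \<in> insert X ((\<lambda>y. {y}) ` (V - X))" using c1 c2 by (cases "x \<in> X") auto
  next
    fix Z assume Z: "Z \<in> insert X ((\<lambda>y. {y}) ` (V - X))"
    obtain x0 where x0: "x0 \<in> X" using ne by blast
    show "Z \<in> (\<Union>x\<in>V. {comp_rel V S `` {x}})"
    proof (cases "Z = X")
      case True thus ?thesis using c1[OF x0] x0 XV by blast
    next
      case False
      then obtain y where "y \<in> V - X" "Z = {y}" using Z by blast
      thus ?thesis using c2 by blast
    qed
  qed
qed

theorem mainTheorem1:
  fixes V :: "'a set" and E :: "'a set set" and d :: nat
  assumes "d \<ge> 1"
    and "graph V E"
    and "connected_graph V E"
    and "bipartite V E"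
    and "card V \<ge> 2 * d + 2"
    and "alpha V E \<ge> d + 1"
  shows "\<exists>S \<subseteq> E. card S \<le> 2 * d + 1 \<and>
           alpha (contr_V V S) (contr_E V E S) \<le> alpha V E - d"
proof -
  note g = assms(2)
  have fV: "finite V" using g by (simp add: graph_def)
  obtain A B where AB: "A \<union> B = V" "A \<inter> B = {}"
    "\<forall>u v. {u, v} \<in> E \<longrightarrow> (u \<in> A \<and> v \<in> B) \<or> (u \<in> B \<and> v \<in> A)"
    using assms(4) unfolding bipartite_def by blast
  have crA: "cross E A" unfolding cross_def
  proof (intro allI impI)
    fix x y assume "{x,y} \<in> E"
    hence "(x \<in> A \<and> y \<in> B) \<or> (x \<in> B \<and> y \<in> A)" using AB(3) by blast
    thus "(x \<in> A) = (y \<notin> A)" using AB(2) by blast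
  qed
  obtain X S where X: "X \<subseteq> V" "S \<subseteq> E" "finite S" "card S \<le> card X - 1" "2*d+1 \<le> card X"
      "card X \<le> 2*d+1 + 1" "\<forall>e\<in>S. e \<subseteq> X" "\<forall>x\<in>X. \<forall>y\<in>X. (x,y) \<in> (adj_rel S)\<^sup>*"
      "card X \<le> 2 * (alpha V E - alpha (V - X) E)"
    using grow[OF g assms(3) crA, of "2*d+1"] assms(5) by auto
  have fX: "finite X" using X(1) fV finite_subset by blast
  have neX: "X \<noteq> {}" using X(5) by auto
  have aVX: "alpha (V - X) E + (d + 1) \<le> alpha V E"
  proof -
    have "alpha (V - X) E \<le> alpha V E" using alpha_mono[OF fV] by auto
    thus ?thesis using X(5,9) by linarith
  qed
  have cV: "contr_V V S = insert X ((\<lambda>y. {y}) ` (V - X))"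
    by (rule contr_V_eq[OF X(1) neX X(7) X(8)])
  have fC: "finite (contr_V V S)" using cV fV by simp
  obtain Z where Z: "Z \<subseteq> X" "d + 1 \<le> card Z" "\<forall>u\<in>Z. \<forall>v\<in>Z. {u,v} \<notin> E"
  proof -
    have "card (X \<inter> A) + card (X - A) = card X"
    proof -
      have "card ((X \<inter> A) \<union> (X - A)) = card (X \<inter> A) + card (X - A)"
        by (rule card_Un_disjoint) (use fX in auto)
      moreover have "(X \<inter> A) \<union> (X - A) = X" by auto
      ultimately show ?thesis by simp
    qed
    hence "d + 1 \<le> card (X \<inter> A) \<or> d + 1 \<le> card (X - A)" using X(5) by linarith
    moreover have "\<forall>u\<in>X \<inter> A. \<forall>v\<in>X \<inter> A. {u,v} \<notin> E" using crA unfolding cross_def by blast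
    moreover have "\<forall>u\<in>X - A. \<forall>v\<in>X - A. {u,v} \<notin> E" using crA unfolding cross_def by blast
    ultimately show ?thesis using that by blast
  qed
  have bound: "card J \<le> alpha V E - d" if J: "independent_set (contr_V V S) (contr_E V E S) J" for J
  proof -
    have JC: "J \<subseteq> contr_V V S" and Jind: "\<forall>P\<in>J. \<forall>Q\<in>J. {P,Q} \<notin> contr_E V E S"
      using J unfolding independent_set_def by auto
    define Y where "Y = {y \<in> V - X. {y} \<in> J}"
    have fY: "finite Y" using fV Y_def by simp
    have JY: "J - {X} = (\<lambda>y. {y}) ` Y" using JC cV unfolding Y_def by auto
    have cY: "card ((\<lambda>y. {y}) ` Y) = card Y" by (rule card_image) (simp add: inj_on_def)
    have edge: "{P,Q} \<in> contr_E V E S" if "P \<in> contr_V V S" "Q \<in> contr_V V S" "P \<noteq> Q"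
        "x \<in> P" "y \<in> Q" "{x,y} \<in> E" for P Q x y
      unfolding contr_E_def using that by blast
    have Yind: "independent_set (V - X) E Y"
      unfolding independent_set_def
    proof (intro conjI ballI)
      show "Y \<subseteq> V - X" using Y_def by auto
    next
      fix u v assume uv: "u \<in> Y" "v \<in> Y"
      show "{u,v} \<notin> E"
      proof
        assume e: "{u,v} \<in> E"
        have "u \<noteq> v" using e crA unfolding cross_def by blast
        hence "{{u},{v}} \<in> contr_E V E S" using edge[of "{u}" "{v}" u v] uv e cV Y_def by auto
        thus False using Jind uv Y_def by auto
      qed
    qed
    have cYb: "card Y \<le> alpha (V - X) E" using alpha_ge[OF _ Yind] fV by simp
    show ?thesis
    proof (cases "X \<in> J")
      case False
      hence "J = (\<lambda>y. {y}) ` Y" using JY by auto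
      thus ?thesis using cY cYb aVX by simp
    next
      case True
      have fJ: "finite J" using JC fC finite_subset by blast
      have "J = insert X (J - {X})" using True by blast
      hence "card J = card (J - {X}) + 1" using fJ by (metis card_insert_disjoint finite_Diff Diff_iff singletonI Suc_eq_plus1)
      hence cJ: "card J = card Y + 1" using JY cY by simp
      have YZ: "independent_set V E (Y \<union> Z)"
        unfolding independent_set_def
      proof (intro conjI ballI)
        show "Y \<union> Z \<subseteq> V" using Y_def Z(1) X(1) by auto
      next
        fix u v assume uv: "u \<in> Y \<union> Z" "v \<in> Y \<union> Z"
        have yz: "{y,z} \<notin> E" if "y \<in> Y" "z \<in> Z" for y z
        proof
          assume e: "{y,z} \<in> E"
          have "{y} \<noteq> X" using that Y_def by auto
          hence "{{y},X} \<in> contr_E V E S" using edge[of "{y}" X y z] that e cV Y_def Z(1) by auto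
          thus False using Jind that True Y_def by auto
        qed
        show "{u,v} \<notin> E"
          using uv yz[of u v] yz[of v u] Z(3) Yind unfolding independent_set_def by (auto simp: insert_commute)
      qed
      have "Y \<inter> Z = {}" using Y_def Z(1) by auto
      hence "card (Y \<union> Z) = card Y + card Z" using fY Z(1) fX finite_subset card_Un_disjoint by metis
      hence "card Y + card Z \<le> alpha V E" using alpha_ge[OF fV YZ] by simp
      thus ?thesis using cJ Z(2) by linarith
    qed
  qed
  have "alpha (contr_V V S) (contr_E V E S) \<le> alpha V E - d"
    using alpha_le[OF fC] bound by blast
  moreover have "card S \<le> 2 * d + 1" using X(4,6) by linarith
  ultimately show ?thesis using X(2) by blast
qed

end
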